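(* The height function of a shrub is determined by its fraction: if $P$ and $P'$ are shrubs on the same finite set $I$ with $f_P=f_{P'}$, then $h_P=h_{P'}$.
   Context: A shrub $P$ on a finite set $I$ is a set $E$ of edges (unordered pairs of distinct elements of $I$) with a height function $h_P:I\to\mathbb{N}$; $j$ covers $i$ if $\{i,j\}\in E$ and $h_P(j)=h_P(i)+1$. Axioms: (1) edges join vertices whose heights differ by $1$; (2) every vertex of positive height covers some vertex; (3) no four distinct $a,b,c,d$ with $a$ covering $b$ and $c$, $c$ covering $d$, $\{b,d\}\notin E$; (4) no five distinct $a,b,c,d,e$ with $a$ covering $c,d$, $b$ covering $d,e$, $\{a,e\}\notin E$, $\{b,c\}\notin E$. A vertex is ramified if it covers at least two distinct vertices; two ramified vertices are equivalent if they cover the same set of vertices; $\operatorname{Ram}(P)$ is the set of equivalence classes, and for $r\in\operatorname{Ram}(P)$, $r^-$ is the common set of vertices covered by elements of $r$. For $S\subseteq I$, $\langle S\rangle_P$ is the set of $j\in I$ such that every descending path from $j$ (each vertex covering the next) to a vertex of height $0$ meets $S$. $P\setminus\langle r\rangle_P$ is the restriction of $P$ to $I\setminus\langle r\rangle_P$. With $u[S]=\sum_{k\in S}u_k$, $$f_P=\frac{1}{\prod_{i\in I}u[\langle\{i\}\rangle_P]}\prod_{r\in\operatorname{Ram}(P)}\frac{u[\langle r^-\rangle_{P\setminus\langle r\rangle_P}]}{u[\langle r^-\rangle_P]}\in\mathbb{Q}(u_i:i\in I).$$ *)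

theory Defs
  imports Complex_Main
begin

definition covers :: "'a set set \<Rightarrow> ('a \<Rightarrow> nat) \<Rightarrow> 'a \<Rightarrow> 'a \<Rightarrow> bool" where
  "covers E h j i \<longleftrightarrow> {i, j} \<in> E \<and> h j = Suc (h i)"

definition is_shrub :: "'a set \<Rightarrow> 'a set set \<Rightarrow> ('a \<Rightarrow> nat) \<Rightarrow> bool" where
  "is_shrub I E h \<longleftrightarrow>
     finite I \<and>
     (\<forall>e\<in>E. \<exists>i j. e = {i, j} \<and> i \<noteq> j \<and> i \<in> I \<and> j \<in> I) \<and>
     \<comment> \<open>(1) edges join vertices whose heights differ by 1\<close>
     (\<forall>i j. {i, j} \<in> E \<longrightarrow> h i = Suc (h j) \<or> h j = Suc (h i)) \<and>
     \<comment> \<open>(2) every vertex of positive height covers some vertex\<close>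
     (\<forall>j\<in>I. 0 < h j \<longrightarrow> (\<exists>i. covers E h j i)) \<and>
     \<comment> \<open>(3)\<close>
     \<not> (\<exists>a b c d. distinct [a, b, c, d] \<and> covers E h a b \<and> covers E h a c \<and>
            covers E h c d \<and> {b, d} \<notin> E) \<and>
     \<comment> \<open>(4)\<close>
     \<not> (\<exists>a b c d e. distinct [a, b, c, d, e] \<and> covers E h a c \<and> covers E h a d \<and>
            covers E h b d \<and> covers E h b e \<and> {a, e} \<notin> E \<and> {b, c} \<notin> E)"

definition dpath :: "'a set set \<Rightarrow> ('a \<Rightarrow> nat) \<Rightarrow> 'a list \<Rightarrow> bool" where
  "dpath E h xs \<longleftrightarrow> xs \<noteq> [] \<and>
     (\<forall>m. Suc m < length xs \<longrightarrow> covers E h (xs ! m) (xs ! Suc m)) \<and> h (last xs) = 0"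

definition gen :: "'a set \<Rightarrow> 'a set set \<Rightarrow> ('a \<Rightarrow> nat) \<Rightarrow> 'a set \<Rightarrow> 'a set" where
  "gen I E h S = {j \<in> I. \<forall>xs. dpath E h xs \<and> hd xs = j \<longrightarrow> set xs \<inter> S \<noteq> {}}"

definition restr_edges :: "'a set set \<Rightarrow> 'a set \<Rightarrow> 'a set set" where
  "restr_edges E X = {e \<in> E. e \<inter> X = {}}"

definition ramified :: "'a set set \<Rightarrow> ('a \<Rightarrow> nat) \<Rightarrow> 'a \<Rightarrow> bool" where
  "ramified E h v \<longleftrightarrow> (\<exists>a b. a \<noteq> b \<and> covers E h v a \<and> covers E h v b)"

definition lower :: "'a set set \<Rightarrow> ('a \<Rightarrow> nat) \<Rightarrow> 'a \<Rightarrow> 'a set" where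
  "lower E h v = {i. covers E h v i}"

text \<open>Ram(P) is indexed by the sets r^- (which determine the class r).\<close>
definition Ram_lows :: "'a set \<Rightarrow> 'a set set \<Rightarrow> ('a \<Rightarrow> nat) \<Rightarrow> 'a set set" where
  "Ram_lows I E h = {lower E h v | v. v \<in> I \<and> ramified E h v}"

definition ram_class :: "'a set \<Rightarrow> 'a set set \<Rightarrow> ('a \<Rightarrow> nat) \<Rightarrow> 'a set \<Rightarrow> 'a set" where
  "ram_class I E h R = {v \<in> I. ramified E h v \<and> lower E h v = R}"

definition usum :: "('a \<Rightarrow> real) \<Rightarrow> 'a set \<Rightarrow> real" where
  "usum u S = (\<Sum>k\<in>S. u k)"

text \<open>The rational function f_P, represented by its values at positive real points u.\<close>
definition fP :: "'a set \<Rightarrow> 'a set set \<Rightarrow> ('a \<Rightarrow> nat) \<Rightarrow> ('a \<Rightarrow> real) \<Rightarrow> real" where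
  "fP I E h u =
     (1 / (\<Prod>i\<in>I. usum u (gen I E h {i}))) *
     (\<Prod>R\<in>Ram_lows I E h.
        (let X = gen I E h (ram_class I E h R) in
           usum u (gen (I - X) (restr_edges E X) h R) / usum u (gen I E h R)))"

end

theory Submission
  imports Defs
begin

inductive reach :: "'a set set \<Rightarrow> ('a \<Rightarrow> nat) \<Rightarrow> 'a \<Rightarrow> 'a \<Rightarrow> bool" for E h where
  rrefl: "reach E h x x"
| rstep: "reach E h x y \<Longrightarrow> covers E h y z \<Longrightarrow> reach E h x z"

lemma shrub_finite: "is_shrub I E h \<Longrightarrow> finite I" unfolding is_shrub_def by (elim conjE)

lemma shrub_edges_raw: "is_shrub I E h \<Longrightarrow> (\<forall>e\<in>E. \<exists>i j. e = {i, j} \<and> i \<noteq> j \<and> i \<in> I \<and> j \<in> I)"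
  unfolding is_shrub_def by (elim conjE)

lemma shrub_ax2_raw: "is_shrub I E h \<Longrightarrow> (\<forall>j\<in>I. 0 < h j \<longrightarrow> (\<exists>i. covers E h j i))"
  unfolding is_shrub_def by (elim conjE)

lemma shrub_ax3_raw: "is_shrub I E h \<Longrightarrow> \<not> (\<exists>a b c d. distinct [a, b, c, d] \<and> covers E h a b \<and> covers E h a c \<and>
            covers E h c d \<and> {b, d} \<notin> E)"
  unfolding is_shrub_def by (elim conjE)

lemma shrub_edge: assumes "is_shrub I E h" "{a,b} \<in> E" shows "a \<in> I" "b \<in> I" "a \<noteq> b"
proof -
  have ex: "\<exists>i j. {a,b} = {i, j} \<and> i \<noteq> j \<and> i \<in> I \<and> j \<in> I"
    using shrub_edges_raw[OF assms(1)] assms(2) by (rule bspec)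
  obtain i j where "{a,b} = {i,j}" "i \<noteq> j" "i \<in> I" "j \<in> I"
    using ex by (elim exE conjE) (rule that)
  note e = this
  have "a \<in> {i,j}" "b \<in> {i,j}" unfolding e(1)[symmetric] by simp_all
  then show "a \<in> I" "b \<in> I" using e by auto
  show "a \<noteq> b"
  proof
    assume ab: "a = b"
    have "i \<in> {a,b}" "j \<in> {a,b}" unfolding e(1) by simp_all
    then show False using ab e(2) by blast
  qed
qed

lemma covers_h: "covers E h x y \<Longrightarrow> h x = Suc (h y)" by (simp add: covers_def)

lemma covers_I: assumes "is_shrub I E h" "covers E h x y" shows "x \<in> I" "y \<in> I"
  using shrub_edge[OF assms(1)] assms(2) unfolding covers_def by blast+

lemma shrub_ax2: "is_shrub I E h \<Longrightarrow> j \<in> I \<Longrightarrow> 0 < h j \<Longrightarrow> \<exists>i. covers E h j i"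
  using shrub_ax2_raw by blast

lemma shrub_ax3: assumes "is_shrub I E h" "covers E h z x" "covers E h z x'" "covers E h x' y" "x \<noteq> x'"
  shows "covers E h x y"
proof -
  have hh: "h z = Suc (h x)" "h z = Suc (h x')" "h x' = Suc (h y)"
    using covers_h[OF assms(2)] covers_h[OF assms(3)] covers_h[OF assms(4)] by simp_all
  then have "distinct [z, x, x', y]" using assms(5) by auto
  then have "{x, y} \<in> E" using assms(2,3,4) shrub_ax3_raw[OF assms(1)] by blast
  then show ?thesis using hh unfolding covers_def by (simp add: insert_commute)
qed

lemma reach_h: "reach E h x y \<Longrightarrow> h y \<le> h x \<and> (y \<noteq> x \<longrightarrow> h y < h x)"
  by (induction rule: reach.induct) (auto simp: covers_def)

lemma reach_I: "reach E h x y \<Longrightarrow> is_shrub I E h \<Longrightarrow> x \<in> I \<Longrightarrow> y \<in> I"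
proof (induction rule: reach.induct)
  case (rrefl x) then show ?case by simp
next
  case (rstep x y z) then show ?case using covers_I(2)[OF rstep.prems(1) rstep.hyps(2)] by simp
qed

lemma reach_prepend: "reach E h y z \<Longrightarrow> covers E h x y \<Longrightarrow> reach E h x z"
proof (induction rule: reach.induct)
  case (rrefl y) then show ?case using reach.rstep[OF reach.rrefl] by metis
next
  case (rstep y w z) then show ?case using reach.rstep by metis
qed

lemma reach_down: assumes "is_shrub I E h" shows "x \<in> I \<Longrightarrow> k \<le> h x \<Longrightarrow> \<exists>y. reach E h x y \<and> h y = k"
proof (induction "h x" arbitrary: x)
  case 0 then show ?case using reach.rrefl by fastforce
next
  case (Suc n)
  show ?case
  proof (cases "k = h x")
    case True then show ?thesis using reach.rrefl by fastforce
  next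
    case False
    obtain z where z: "covers E h x z" using shrub_ax2[OF assms Suc(3)] Suc(2) by auto
    have "h z = n" using covers_h[OF z] Suc(2) by simp
    have "z \<in> I" using covers_I(2)[OF assms z] .
    have "k \<le> h z" using Suc(4) Suc(2) False \<open>h z = n\<close> by simp
    then obtain y where y: "reach E h z y" "h y = k" using Suc(1)[OF \<open>h z = n\<close>[symmetric] \<open>z \<in> I\<close>] by blast
    have "reach E h x y" using reach_prepend[OF y(1) z] .
    then show ?thesis using y(2) by blast
  qed
qed

lemma dpath_Cons: "dpath E h ys \<Longrightarrow> covers E h x (hd ys) \<Longrightarrow> dpath E h (x # ys)"
proof -
  assume d: "dpath E h ys" and c: "covers E h x (hd ys)"
  have ne: "ys \<noteq> []" using d by (simp add: dpath_def)
  show ?thesis unfolding dpath_def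
  proof (intro conjI allI impI)
    show "x # ys \<noteq> []" by simp
    show "h (last (x # ys)) = 0" using d ne by (simp add: dpath_def)
    fix m assume m: "Suc m < length (x # ys)"
    show "covers E h ((x # ys) ! m) ((x # ys) ! Suc m)"
    proof (cases m)
      case 0 then show ?thesis using c ne by (simp add: hd_conv_nth)
    next
      case (Suc m') then show ?thesis using d m by (simp add: dpath_def)
    qed
  qed
qed

lemma dpath_exists: assumes "is_shrub I E h" shows "x \<in> I \<Longrightarrow> \<exists>xs. dpath E h xs \<and> hd xs = x"
proof (induction "h x" arbitrary: x)
  case 0 then show ?case by (intro exI[of _ "[x]"]) (auto simp: dpath_def)
next
  case (Suc n)
  obtain z where z: "covers E h x z" using shrub_ax2[OF assms Suc(3)] Suc(2) by auto
  have "h z = n" using covers_h[OF z] Suc(2) by simp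
  have "z \<in> I" using covers_I(2)[OF assms z] .
  then obtain ys where ys: "dpath E h ys" "hd ys = z" using Suc(1)[OF \<open>h z = n\<close>[symmetric] \<open>z \<in> I\<close>] by blast
  have "dpath E h (x # ys)" using dpath_Cons[OF ys(1)] z ys(2) by simp
  then show ?case by (intro exI[of _ "x # ys"]) simp
qed

lemma dpath_hd: "dpath E h xs \<Longrightarrow> hd xs \<in> set xs" by (simp add: dpath_def)

lemma dpath_reach_nth: "dpath E h xs \<Longrightarrow> m < length xs \<Longrightarrow> reach E h (hd xs) (xs ! m)"
proof (induction m)
  case 0
  have "hd xs = xs ! 0" using 0 by (simp add: hd_conv_nth dpath_def)
  then show ?case using reach.rrefl by metis
next
  case (Suc m)
  have c: "covers E h (xs!m) (xs!Suc m)" using Suc.prems unfolding dpath_def by blast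
  have "reach E h (hd xs) (xs!m)" using Suc.IH Suc.prems by simp
  then show ?case by (rule reach.rstep[OF _ c])
qed

lemma dpath_reach: "dpath E h xs \<Longrightarrow> x \<in> set xs \<Longrightarrow> reach E h (hd xs) x"
proof -
  assume d: "dpath E h xs" "x \<in> set xs"
  then obtain m where "m < length xs" "x = xs ! m" by (metis in_set_conv_nth)
  then show ?thesis using dpath_reach_nth[OF d(1)] by simp
qed

lemma dpath_height_nth: "dpath E h xs \<Longrightarrow> m < length xs \<Longrightarrow> h (xs ! m) + m = h (hd xs)"
proof (induction m)
  case 0
  have "hd xs = xs ! 0" using 0 by (simp add: hd_conv_nth dpath_def)
  then show ?case by simp
next
  case (Suc m)
  have c: "covers E h (xs!m) (xs!Suc m)" using Suc.prems unfolding dpath_def by blast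
  have "h (xs!m) + m = h (hd xs)" using Suc.IH Suc.prems by simp
  then show ?case using covers_h[OF c] by simp
qed

lemma dpath_length: "dpath E h xs \<Longrightarrow> length xs = Suc (h (hd xs))"
proof -
  assume d: "dpath E h xs"
  then have "xs \<noteq> []" "h (last xs) = 0" unfolding dpath_def by blast+
  moreover have "length xs - 1 < length xs" using \<open>xs \<noteq> []\<close> by simp
  ultimately have "h (hd xs) = length xs - 1"
    using dpath_height_nth[OF d, of "length xs - 1"] by (simp add: last_conv_nth)
  then show ?thesis using \<open>xs \<noteq> []\<close> by (cases xs) auto
qed

lemma dpath_level: "dpath E h xs \<Longrightarrow> k \<le> h (hd xs) \<Longrightarrow> \<exists>x\<in>set xs. h x = k"
proof -
  assume d: "dpath E h xs" "k \<le> h (hd xs)"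
  have lt: "h (hd xs) - k < length xs" using dpath_length[OF d(1)] by simp
  moreover have "h (xs ! (h (hd xs) - k)) = k" using dpath_height_nth[OF d(1) lt] d(2) by simp
  ultimately show ?thesis using nth_mem[OF lt] by blast
qed

lemma dpath_inj: "dpath E h xs \<Longrightarrow> x \<in> set xs \<Longrightarrow> y \<in> set xs \<Longrightarrow> h x = h y \<Longrightarrow> x = y"
proof -
  assume d: "dpath E h xs" "x \<in> set xs" "y \<in> set xs" "h x = h y"
  then obtain p q where "p < length xs" "x = xs ! p" "q < length xs" "y = xs ! q" by (metis in_set_conv_nth)
  note pq = this
  have "h x + p = h (hd xs)" "h y + q = h (hd xs)" using dpath_height_nth[OF d(1)] pq by simp_all
  then have "p = q" using d(4) by simp
  then show ?thesis using pq by simp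
qed

lemma dpath_next: "dpath E h xs \<Longrightarrow> w \<in> set xs \<Longrightarrow> 0 < h w \<Longrightarrow> \<exists>y\<in>set xs. covers E h w y"
proof -
  assume d: "dpath E h xs" "w \<in> set xs" "0 < h w"
  then obtain p where p: "p < length xs" "w = xs ! p" by (metis in_set_conv_nth)
  have "Suc p < length xs"
  proof (rule ccontr)
    assume "\<not> Suc p < length xs"
    then have "p = length xs - 1" using p by simp
    moreover have "xs \<noteq> []" "h (last xs) = 0" using d(1) unfolding dpath_def by blast+
    ultimately show False using d(3) p by (simp add: last_conv_nth)
  qed
  then have "covers E h (xs ! p) (xs ! Suc p)" using d(1) unfolding dpath_def by blast
  moreover have "xs ! Suc p \<in> set xs" using \<open>Suc p < length xs\<close> by (rule nth_mem)
  ultimately show ?thesis using p by blast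
qed

lemma dpath_through_gen: "reach E h x y \<Longrightarrow> dpath E h ys \<Longrightarrow> hd ys = y \<Longrightarrow>
   \<exists>xs. dpath E h xs \<and> hd xs = x \<and> set ys \<subseteq> set xs"
proof (induction arbitrary: ys rule: reach.induct)
  case (rrefl x) then show ?case by blast
next
  case (rstep x y z)
  have "dpath E h (y # ys)" using dpath_Cons[OF rstep.prems(1)] rstep.hyps(2) rstep.prems(2) by simp
  from rstep.IH[OF this] show ?case by auto
qed

lemma dpath_through: assumes "is_shrub I E h" "reach E h x y" "x \<in> I"
  shows "\<exists>xs. dpath E h xs \<and> hd xs = x \<and> y \<in> set xs"
proof -
  have "y \<in> I" using reach_I[OF assms(2,1,3)] .
  then obtain ys where ys: "dpath E h ys" "hd ys = y" using dpath_exists[OF assms(1)] by blast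
  then obtain xs where xs: "dpath E h xs" "hd xs = x" "set ys \<subseteq> set xs"
    using dpath_through_gen[OF assms(2) ys] by blast
  have "y \<in> set ys" using dpath_hd[OF ys(1)] ys(2) by simp
  then show ?thesis using xs by blast
qed

lemma dpath_drop: "dpath E h xs \<Longrightarrow> p < length xs \<Longrightarrow> dpath E h (drop p xs) \<and> hd (drop p xs) = xs ! p"
proof -
  assume d: "dpath E h xs" and p: "p < length xs"
  have "dpath E h (drop p xs)" unfolding dpath_def
  proof (intro conjI allI impI)
    show "drop p xs \<noteq> []" using p by simp
    show "h (last (drop p xs)) = 0" using d p by (simp add: dpath_def last_drop)
    fix m assume "Suc m < length (drop p xs)"
    then show "covers E h (drop p xs ! m) (drop p xs ! Suc m)" using d by (simp add: dpath_def)
  qed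
  then show ?thesis using p by (simp add: hd_drop_conv_nth)
qed



definition lev :: "'a set set \<Rightarrow> ('a \<Rightarrow> nat) \<Rightarrow> 'a \<Rightarrow> nat \<Rightarrow> 'a set" where
  "lev E h j k = {x. reach E h j x \<and> h x = k}"

lemma gen_iff: "j \<in> gen I E h S \<longleftrightarrow> j \<in> I \<and> (\<forall>xs. dpath E h xs \<and> hd xs = j \<longrightarrow> set xs \<inter> S \<noteq> {})"
  by (simp add: gen_def)

lemma lev_sub: assumes "is_shrub I E h" "j \<in> I" shows "lev E h j k \<subseteq> I"
proof
  fix x assume "x \<in> lev E h j k"
  then have "reach E h j x" by (simp add: lev_def)
  then show "x \<in> I" using reach_I[OF _ assms(1,2)] by simp
qed

lemma lev_finite: assumes "is_shrub I E h" "j \<in> I" shows "finite (lev E h j k)"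
  using lev_sub[OF assms] shrub_finite[OF assms(1)] by (rule finite_subset)

lemma lev_ne: assumes "is_shrub I E h" "j \<in> I" "k \<le> h j" shows "lev E h j k \<noteq> {}"
  using reach_down[OF assms] unfolding lev_def by blast

lemma lev_top: "lev E h j (h j) = {j}"
proof -
  have "x = j" if "reach E h j x" "h x = h j" for x
    using reach_h[OF that(1)] that(2) by auto
  then show ?thesis unfolding lev_def by (auto intro: reach.rrefl)
qed

lemma lev_le: "x \<in> lev E h j k \<Longrightarrow> k \<le> h j"
proof -
  assume "x \<in> lev E h j k"
  then have "reach E h j x" "h x = k" by (simp_all add: lev_def)
  then show ?thesis using reach_h[of E h j x] by simp
qed

lemma lev_path: assumes "dpath E h xs" "hd xs = j" "k \<le> h j" shows "\<exists>x\<in>set xs. x \<in> lev E h j k"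
proof -
  obtain x where x: "x \<in> set xs" "h x = k" using dpath_level[OF assms(1)] assms(2,3) by blast
  have "reach E h j x" using dpath_reach[OF assms(1) x(1)] assms(2) by simp
  then show ?thesis using x unfolding lev_def by blast
qed

lemma lev_through: assumes "is_shrub I E h" "j \<in> I" "x \<in> lev E h j k"
  shows "\<exists>xs. dpath E h xs \<and> hd xs = j \<and> x \<in> set xs"
proof -
  have "reach E h j x" using assms(3) by (simp add: lev_def)
  then show ?thesis using dpath_through[OF assms(1) _ assms(2)] by simp
qed

lemma gen_single: assumes S: "is_shrub I E h" and j: "j \<in> I" and i: "i \<in> I"
  shows "j \<in> gen I E h {i} \<longleftrightarrow> h i \<le> h j \<and> lev E h j (h i) = {i}"
proof
  assume g: "j \<in> gen I E h {i}"
  obtain xs where xs: "dpath E h xs" "hd xs = j" using dpath_exists[OF S j] by blast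
  have "i \<in> set xs" using g xs unfolding gen_iff by blast
  then have ri: "reach E h j i" using dpath_reach[OF xs(1)] xs(2) by simp
  have "h i \<le> h j" using reach_h[OF ri] by simp
  moreover have "lev E h j (h i) = {i}"
  proof
    show "{i} \<subseteq> lev E h j (h i)" using ri unfolding lev_def by simp
    show "lev E h j (h i) \<subseteq> {i}"
    proof
      fix x assume x: "x \<in> lev E h j (h i)"
      obtain zs where zs: "dpath E h zs" "hd zs = j" "x \<in> set zs" using lev_through[OF S j x] by blast
      have "i \<in> set zs" using g zs(1,2) unfolding gen_iff by blast
      moreover have "h x = h i" using x unfolding lev_def by simp
      ultimately show "x \<in> {i}" using dpath_inj[OF zs(1) zs(3)] by simp
    qed
  qed
  ultimately show "h i \<le> h j \<and> lev E h j (h i) = {i}" by simp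
next
  assume a: "h i \<le> h j \<and> lev E h j (h i) = {i}"
  show "j \<in> gen I E h {i}" unfolding gen_iff
  proof (intro conjI allI impI)
    show "j \<in> I" by (rule j)
    fix xs assume xs: "dpath E h xs \<and> hd xs = j"
    then obtain x where "x \<in> set xs" "x \<in> lev E h j (h i)" using lev_path[of E h xs j "h i"] a by blast
    then show "set xs \<inter> {i} \<noteq> {}" using a by auto
  qed
qed

lemma lower_sub: "x \<in> lev E h j m \<Longrightarrow> lower E h x \<subseteq> lev E h j (m - 1)"
  unfolding lev_def lower_def using reach.rstep covers_h by fastforce

lemma reach_inv: "reach E h a b \<Longrightarrow> b = a \<or> (\<exists>x. reach E h a x \<and> covers E h x b)"
  by (erule reach.cases) blast+

lemma lev_pred: assumes "y \<in> lev E h j k" "k < h j" shows "\<exists>x\<in>lev E h j (Suc k). covers E h x y"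
proof -
  have r: "reach E h j y" "h y = k" using assms(1) unfolding lev_def by auto
  have "y \<noteq> j" using r assms(2) by auto
  then obtain x where "reach E h j x" "covers E h x y" using reach_inv[OF r(1)] by blast
  then show ?thesis using r(2) covers_h unfolding lev_def by fastforce
qed

lemma key: assumes S: "is_shrub I E h" and j: "j \<in> I"
  shows "h j - m = d \<Longrightarrow> 1 \<le> m \<Longrightarrow> m \<le> h j \<Longrightarrow> x \<in> lev E h j m \<Longrightarrow> lower E h x = lev E h j (m - 1)"
proof (induction d arbitrary: m x)
  case 0
  then have "m = h j" by simp
  then have "x = j" using 0 lev_top by (metis singletonD)
  show ?case
  proof
    show "lower E h x \<subseteq> lev E h j (m - 1)" using lower_sub[OF 0(4)] .
    show "lev E h j (m - 1) \<subseteq> lower E h x"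
    proof
      fix y assume y: "y \<in> lev E h j (m - 1)"
      obtain x' where x': "x' \<in> lev E h j (Suc (m - 1))" "covers E h x' y"
        using lev_pred[OF y] 0 by auto
      have "x' = x" using x' \<open>m = h j\<close> \<open>x = j\<close> 0(2) lev_top by (metis Suc_pred' less_le_trans singletonD zero_less_one)
      then show "y \<in> lower E h x" using x' unfolding lower_def by simp
    qed
  qed
next
  case (Suc d)
  show ?case
  proof
    show "lower E h x \<subseteq> lev E h j (m - 1)" using lower_sub[OF Suc(5)] .
    show "lev E h j (m - 1) \<subseteq> lower E h x"
    proof
      fix y assume y: "y \<in> lev E h j (m - 1)"
      have ml: "m - 1 < h j" using Suc.prems by simp
      obtain x' where x': "x' \<in> lev E h j (Suc (m - 1))" "covers E h x' y"
        using lev_pred[OF y ml] by blast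
      have sm: "Suc (m - 1) = m" using Suc.prems by simp
      show "y \<in> lower E h x"
      proof (cases "x' = x")
        case True then show ?thesis using x' unfolding lower_def by simp
      next
        case False
        have "m < h j" using Suc.prems by simp
        then obtain z where z: "z \<in> lev E h j (Suc m)" using lev_ne[OF S j, of "Suc m"] by auto
        have lz: "lower E h z = lev E h j m"
          using Suc.IH[of "Suc m" z] Suc.prems z by simp
        have "covers E h z x" "covers E h z x'" using lz Suc.prems(4) x'(1) sm unfolding lower_def by auto
        then have "covers E h x y" using shrub_ax3[OF S _ _ x'(2) False[symmetric]] by blast
        then show ?thesis unfolding lower_def by simp
      qed
    qed
  qed
qed



lemma card2_ex: "finite S \<Longrightarrow> 2 \<le> card S \<Longrightarrow> \<exists>a b. a \<noteq> b \<and> a \<in> S \<and> b \<in> S"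
proof -
  assume f: "finite S" and c: "2 \<le> card S"
  then have "S \<noteq> {}" by auto
  then obtain a where a: "a \<in> S" by blast
  have "card (S - {a}) \<ge> 1" using c a f by (simp add: card_Diff_singleton)
  then have "S - {a} \<noteq> {}" by (metis card.empty not_one_le_zero)
  then obtain b where "b \<in> S - {a}" by blast
  then show ?thesis using a by blast
qed

lemma hit_class: assumes "dpath E h xs" "w \<in> set xs" "w \<in> ram_class I E h R"
  shows "set xs \<inter> R \<noteq> {}"
proof -
  have rw: "ramified E h w" "lower E h w = R" using assms(3) unfolding ram_class_def by auto
  then obtain a where "covers E h w a" unfolding ramified_def by blast
  then have "0 < h w" using covers_h by fastforce
  then obtain y where y: "y \<in> set xs" "covers E h w y" using dpath_next[OF assms(1,2)] by blast
  then have "y \<in> R" using rw(2) unfolding lower_def by auto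
  then show ?thesis using y(1) by blast
qed

lemma class_gen_sub: "gen I E h (ram_class I E h R) \<subseteq> gen I E h R"
proof
  fix j assume j: "j \<in> gen I E h (ram_class I E h R)"
  show "j \<in> gen I E h R" unfolding gen_iff
  proof (intro conjI allI impI)
    show "j \<in> I" using j by (simp add: gen_iff)
    fix xs assume xs: "dpath E h xs \<and> hd xs = j"
    then obtain w where "w \<in> set xs" "w \<in> ram_class I E h R" using j unfolding gen_iff by blast
    then show "set xs \<inter> R \<noteq> {}" using hit_class xs by metis
  qed
qed

lemma covers_restr: "covers (restr_edges E X) h a b \<Longrightarrow> covers E h a b"
  unfolding covers_def restr_edges_def by simp

lemma dpath_restr: "dpath (restr_edges E X) h xs \<Longrightarrow> dpath E h xs"
  unfolding dpath_def using covers_restr by metis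

lemma dpath_to_restr: assumes "dpath E h xs" "set xs \<inter> X = {}" shows "dpath (restr_edges E X) h xs"
  unfolding dpath_def
proof (intro conjI allI impI)
  show "xs \<noteq> []" "h (last xs) = 0" using assms(1) unfolding dpath_def by blast+
  fix m assume m: "Suc m < length xs"
  then have c: "covers E h (xs ! m) (xs ! Suc m)" using assms(1) unfolding dpath_def by blast
  have "xs ! m \<in> set xs" "xs ! Suc m \<in> set xs" using m by simp_all
  then have "xs ! m \<notin> X" "xs ! Suc m \<notin> X" using assms(2) by blast+
  then show "covers (restr_edges E X) h (xs ! m) (xs ! Suc m)"
    using c unfolding covers_def restr_edges_def by auto
qed

lemma gen_restr: fixes I :: "'a set" and E :: "'a set set" and h :: "'a \<Rightarrow> nat" and R :: "'a set" defines "X \<equiv> gen I E h (ram_class I E h R)"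
  shows "gen (I - X) (restr_edges E X) h R = gen I E h R - X"
proof
  show "gen (I - X) (restr_edges E X) h R \<subseteq> gen I E h R - X"
  proof
    fix j assume j: "j \<in> gen (I - X) (restr_edges E X) h R"
    have jI: "j \<in> I" "j \<notin> X" using j by (simp_all add: gen_iff)
    have "j \<in> gen I E h R" unfolding gen_iff
    proof (intro conjI allI impI)
      show "j \<in> I" by (rule jI(1))
      fix xs assume xs: "dpath E h xs \<and> hd xs = j"
      show "set xs \<inter> R \<noteq> {}"
      proof (cases "set xs \<inter> X = {}")
        case True
        then have "dpath (restr_edges E X) h xs" using dpath_to_restr xs by blast
        then show ?thesis using j xs unfolding gen_iff by blast
      next
        case False
        then obtain x where x: "x \<in> set xs" "x \<in> X" by blast
        then obtain p where p: "p < length xs" "x = xs ! p" by (metis in_set_conv_nth)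
        have dd: "dpath E h (drop p xs)" "hd (drop p xs) = x" using dpath_drop[OF _ p(1)] xs p(2) by auto
        then obtain w where w: "w \<in> set (drop p xs)" "w \<in> ram_class I E h R"
          using x(2) unfolding X_def gen_iff by blast
        have "set (drop p xs) \<inter> R \<noteq> {}" using hit_class[OF dd(1) w] .
        then show ?thesis using set_drop_subset[of p xs] by blast
      qed
    qed
    then show "j \<in> gen I E h R - X" using jI by simp
  qed
  show "gen I E h R - X \<subseteq> gen (I - X) (restr_edges E X) h R"
  proof
    fix j assume j: "j \<in> gen I E h R - X"
    show "j \<in> gen (I - X) (restr_edges E X) h R" unfolding gen_iff
    proof (intro conjI allI impI)
      show "j \<in> I - X" using j by (simp add: gen_iff)
      fix xs assume xs: "dpath (restr_edges E X) h xs \<and> hd xs = j"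
      then have "dpath (restr_edges E X) h xs" by (rule conjunct1)
      then have "dpath E h xs" by (rule dpath_restr)
      moreover have "\<forall>xs. dpath E h xs \<and> hd xs = j \<longrightarrow> set xs \<inter> R \<noteq> {}"
        using j by (simp add: gen_iff)
      ultimately show "set xs \<inter> R \<noteq> {}" using xs by simp
    qed
  qed
qed



lemma lower_I: "is_shrub I E h \<Longrightarrow> lower E h v \<subseteq> I"
proof
  assume S: "is_shrub I E h"
  fix i assume "i \<in> lower E h v"
  then have "covers E h v i" by (simp add: lower_def)
  then show "i \<in> I" using covers_I(2)[OF S] by simp
qed

lemma ramified_card: assumes "is_shrub I E h" "2 \<le> card (lower E h x)" shows "ramified E h x"
proof -
  have "finite (lower E h x)" using lower_I[OF assms(1)] shrub_finite[OF assms(1)] by (rule finite_subset)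
  then obtain a b where "a \<noteq> b" "a \<in> lower E h x" "b \<in> lower E h x" using card2_ex[OF _ assms(2)] by blast
  then show ?thesis unfolding ramified_def lower_def by blast
qed

lemma B_char: assumes S: "is_shrub I E h" and j: "j \<in> I"
  shows "{R \<in> Ram_lows I E h. j \<in> gen I E h (ram_class I E h R)}
       = (\<lambda>k. lev E h j k) ` {k. k < h j \<and> 2 \<le> card (lev E h j k)}"
proof
  show "{R \<in> Ram_lows I E h. j \<in> gen I E h (ram_class I E h R)}
       \<subseteq> (\<lambda>k. lev E h j k) ` {k. k < h j \<and> 2 \<le> card (lev E h j k)}"
  proof
    fix R assume R: "R \<in> {R \<in> Ram_lows I E h. j \<in> gen I E h (ram_class I E h R)}"
    then have RR: "R \<in> Ram_lows I E h" and jg: "j \<in> gen I E h (ram_class I E h R)" by simp_all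
    obtain v where v: "v \<in> I" "ramified E h v" "R = lower E h v" using RR unfolding Ram_lows_def by blast
    obtain a b where ab: "a \<noteq> b" "covers E h v a" "covers E h v b" using v(2) unfolding ramified_def by blast
    define k where "k = h a"
    have aR: "a \<in> R" "b \<in> R" using ab v(3) unfolding lower_def by simp_all
    have hcl: "h w = Suc k" if "w \<in> ram_class I E h R" for w
    proof -
      have "lower E h w = R" using that unfolding ram_class_def by simp
      then have "a \<in> lower E h w" using aR by simp
      then have "covers E h w a" by (simp add: lower_def)
      then show ?thesis using covers_h k_def by simp
    qed
    obtain xs where xs: "dpath E h xs" "hd xs = j" using dpath_exists[OF S j] by blast
    have "\<forall>xs. dpath E h xs \<and> hd xs = j \<longrightarrow> set xs \<inter> ram_class I E h R \<noteq> {}"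
      using jg by (simp add: gen_iff)
    then have hit: "\<And>xs. dpath E h xs \<Longrightarrow> hd xs = j \<Longrightarrow> \<exists>w. w \<in> set xs \<and> w \<in> ram_class I E h R"
      by blast
    obtain w where w: "w \<in> set xs" "w \<in> ram_class I E h R" using hit[OF xs] by blast
    have "reach E h j w" using dpath_reach[OF xs(1) w(1)] xs(2) by simp
    then have "h w \<le> h j" using reach_h[of E h j w] by simp
    then have kj: "Suc k \<le> h j" using hcl[OF w(2)] by simp
    have levcl: "lev E h j (Suc k) \<subseteq> ram_class I E h R"
    proof
      fix x assume x: "x \<in> lev E h j (Suc k)"
      obtain zs where zs: "dpath E h zs" "hd zs = j" "x \<in> set zs" using lev_through[OF S j x] by blast
      obtain w' where w': "w' \<in> set zs" "w' \<in> ram_class I E h R" using hit[OF zs(1,2)] by blast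
      have "h w' = h x" using hcl[OF w'(2)] x unfolding lev_def by simp
      then have "w' = x" using dpath_inj[OF zs(1) w'(1) zs(3)] by simp
      then show "x \<in> ram_class I E h R" using w'(2) by simp
    qed
    obtain x where x: "x \<in> lev E h j (Suc k)" using lev_ne[OF S j kj] by blast
    have "lower E h x = lev E h j k"
      using key[OF S j refl _ kj x] by simp
    moreover have "lower E h x = R" using levcl x unfolding ram_class_def by blast
    ultimately have Rk: "R = lev E h j k" by simp
    have "finite R" using lev_finite[OF S j] Rk by simp
    moreover have "{a, b} \<subseteq> R" using aR by simp
    ultimately have "card {a, b} \<le> card R" by (rule card_mono)
    then have "2 \<le> card R" using ab(1) by simp
    then show "R \<in> (\<lambda>k. lev E h j k) ` {k. k < h j \<and> 2 \<le> card (lev E h j k)}"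
      using Rk kj by auto
  qed
  show "(\<lambda>k. lev E h j k) ` {k. k < h j \<and> 2 \<le> card (lev E h j k)}
      \<subseteq> {R \<in> Ram_lows I E h. j \<in> gen I E h (ram_class I E h R)}"
  proof
    fix R assume "R \<in> (\<lambda>k. lev E h j k) ` {k. k < h j \<and> 2 \<le> card (lev E h j k)}"
    then obtain k where k: "k < h j" "2 \<le> card (lev E h j k)" "R = lev E h j k" by blast
    have kj: "Suc k \<le> h j" using k by simp
    have inclass: "x \<in> ram_class I E h R" if x: "x \<in> lev E h j (Suc k)" for x
    proof -
      have "lower E h x = lev E h j k" using key[OF S j refl _ kj x] by simp
      moreover have "x \<in> I" using lev_sub[OF S j] x by blast
      ultimately show ?thesis using ramified_card[OF S] k unfolding ram_class_def by simp
    qed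
    obtain x where x: "x \<in> lev E h j (Suc k)" using lev_ne[OF S j kj] by blast
    have "R \<in> Ram_lows I E h" using inclass[OF x] unfolding ram_class_def Ram_lows_def by blast
    moreover have "j \<in> gen I E h (ram_class I E h R)" unfolding gen_iff
    proof (intro conjI allI impI)
      show "j \<in> I" by (rule j)
      fix xs assume xs: "dpath E h xs \<and> hd xs = j"
      then obtain y where "y \<in> set xs" "y \<in> lev E h j (Suc k)" using lev_path[of E h xs j "Suc k"] kj by blast
      then show "set xs \<inter> ram_class I E h R \<noteq> {}" using inclass[of y] by blast
    qed
    ultimately show "R \<in> {R \<in> Ram_lows I E h. j \<in> gen I E h (ram_class I E h R)}" by simp
  qed
qed



lemma count_comb: assumes S: "is_shrub I E h" and j: "j \<in> I"
  shows "card {i \<in> I. j \<in> gen I E h {i}} + card {R \<in> Ram_lows I E h. j \<in> gen I E h (ram_class I E h R)}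
         = Suc (h j)"
proof -
  define K1 where "K1 = {k. k \<le> h j \<and> card (lev E h j k) = 1}"
  define K2 where "K2 = {k. k < h j \<and> 2 \<le> card (lev E h j k)}"
  define A where "A = {i \<in> I. j \<in> gen I E h {i}}"
  have A_iff: "i \<in> A \<longleftrightarrow> i \<in> I \<and> h i \<le> h j \<and> lev E h j (h i) = {i}" for i
    unfolding A_def using gen_single[OF S j, of i] by auto
  have injA: "inj_on h A"
  proof
    fix x y assume "x \<in> A" "y \<in> A" "h x = h y"
    then have "lev E h j (h x) = {x}" "lev E h j (h x) = {y}" using A_iff by auto
    then show "x = y" by simp
  qed
  have imA: "h ` A = K1"
  proof
    show "h ` A \<subseteq> K1" unfolding K1_def using A_iff by auto
    show "K1 \<subseteq> h ` A"
    proof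
      fix k assume "k \<in> K1"
      then have k: "k \<le> h j" "card (lev E h j k) = 1" unfolding K1_def by auto
      then obtain i where i: "lev E h j k = {i}" using card_1_singletonE[OF k(2)] by blast
      then have "i \<in> lev E h j k" by simp
      then have hi: "h i = k" and iI: "i \<in> I" using lev_sub[OF S j] unfolding lev_def by auto
      then have "i \<in> A" using A_iff i k by simp
      then show "k \<in> h ` A" using hi by blast
    qed
  qed
  have cA: "card A = card K1" using card_image[OF injA] imA by simp
  have injL: "inj_on (lev E h j) K2"
  proof
    fix k k' assume kk: "k \<in> K2" "k' \<in> K2" "lev E h j k = lev E h j k'"
    have "k \<le> h j" using kk(1) unfolding K2_def by simp
    then obtain x where "x \<in> lev E h j k" using lev_ne[OF S j] by blast
    then have "x \<in> lev E h j k" "x \<in> lev E h j k'" using kk(3) by auto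
    then show "k = k'" unfolding lev_def by simp
  qed
  have cB: "card {R \<in> Ram_lows I E h. j \<in> gen I E h (ram_class I E h R)} = card K2"
    using B_char[OF S j] card_image[OF injL] unfolding K2_def by simp
  have un: "K1 \<union> K2 = {..h j}"
  proof
    show "K1 \<union> K2 \<subseteq> {..h j}" unfolding K1_def K2_def by auto
    show "{..h j} \<subseteq> K1 \<union> K2"
    proof
      fix k assume "k \<in> {..h j}"
      then have k: "k \<le> h j" by simp
      have "lev E h j k \<noteq> {}" using lev_ne[OF S j k] .
      then have c1: "1 \<le> card (lev E h j k)" using lev_finite[OF S j] by (simp add: Suc_le_eq card_gt_0_iff)
      show "k \<in> K1 \<union> K2"
      proof (cases "card (lev E h j k) = 1")
        case True then show ?thesis using k unfolding K1_def by simp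
      next
        case False
        then have "k \<noteq> h j" using lev_top[of E h j] by auto
        then show ?thesis using k c1 False unfolding K2_def by simp
      qed
    qed
  qed
  have dis: "K1 \<inter> K2 = {}" unfolding K1_def K2_def by auto
  have fin: "finite K1" "finite K2" unfolding K1_def K2_def by auto
  have "card K1 + card K2 = Suc (h j)"
    using card_Un_disjoint[OF fin dis] un by simp
  then show ?thesis using cA cB unfolding A_def by simp
qed



lemma pow_ratio_tendsto: fixes p q :: nat and c :: real
  assumes lim: "((\<lambda>t::real. t ^ p / t ^ q) \<longlongrightarrow> c) at_top" and c: "c \<noteq> 0"
  shows "p = q"
proof (rule ccontr)
  assume ne: "p \<noteq> q"
  have bot: "(at_top :: real filter) \<noteq> bot" by simp
  have ev: "eventually (\<lambda>t::real. 0 < t) at_top" by (rule eventually_gt_at_top)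
  show False
  proof (cases "q < p")
    case True
    have e: "eventually (\<lambda>t::real. t ^ p / t ^ q = t ^ (p - q)) at_top"
      using ev by eventually_elim (use True in \<open>simp add: power_diff\<close>)
    have "((\<lambda>t::real. t ^ (p - q)) \<longlongrightarrow> c) at_top" using Lim_transform_eventually[OF lim e] .
    moreover have "filterlim (\<lambda>t::real. t ^ (p - q)) at_top at_top"
      using filterlim_pow_at_top[OF _ filterlim_ident] True by simp
    ultimately show False
      using not_tendsto_and_filterlim_at_infinity[OF bot] filterlim_at_top_imp_at_infinity by blast
  next
    case False
    then have qp: "p < q" using ne by simp
    have e: "eventually (\<lambda>t::real. t ^ p / t ^ q = inverse (t ^ (q - p))) at_top"
      using ev by eventually_elim (use qp in \<open>simp add: power_diff divide_inverse\<close>)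
    have "((\<lambda>t::real. inverse (t ^ (q - p))) \<longlongrightarrow> c) at_top" using Lim_transform_eventually[OF lim e] .
    moreover have "((\<lambda>t::real. inverse (t ^ (q - p))) \<longlongrightarrow> 0) at_top"
      using tendsto_inverse_0_at_top[OF filterlim_pow_at_top[OF _ filterlim_ident]] qp by simp
    ultimately have "c = 0" using tendsto_unique[OF bot] by blast
    then show False using c by simp
  qed
qed

lemma exps_eq: fixes G G' :: "real \<Rightarrow> real" and a b a' b' :: nat
  assumes eq: "\<And>t. 0 < t \<Longrightarrow> G t * (t ^ a / t ^ b) = G' t * (t ^ a' / t ^ b')"
    and lG: "(G \<longlongrightarrow> c) at_top" and lG': "(G' \<longlongrightarrow> c') at_top" and c: "0 < c" "0 < c'"
  shows "a + b' = a' + b"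
proof -
  have ev: "eventually (\<lambda>t. 0 < G t \<and> 0 < t) at_top"
    using order_tendstoD(1)[OF lG c(1)] eventually_gt_at_top[of 0] by (rule eventually_conj)
  have e: "eventually (\<lambda>t::real. G' t / G t = t ^ (a + b') / t ^ (a' + b)) at_top"
    using ev
  proof eventually_elim
    case (elim t)
    then have "t ^ a / t ^ b = (G' t / G t) * (t ^ a' / t ^ b')" using eq[of t] by (simp add: field_simps)
    then show ?case using elim by (simp add: field_simps power_add)
  qed
  have "((\<lambda>t. G' t / G t) \<longlongrightarrow> c' / c) at_top" using tendsto_divide[OF lG' lG] c by simp
  then have "((\<lambda>t::real. t ^ (a + b') / t ^ (a' + b)) \<longlongrightarrow> c' / c) at_top"
    using Lim_transform_eventually[OF _ e] by simp
  moreover have "c' / c \<noteq> 0" using c by simp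
  ultimately show ?thesis by (rule pow_ratio_tendsto)
qed



definition uu :: "'a \<Rightarrow> real \<Rightarrow> 'a \<Rightarrow> real" where
  "uu j t = (\<lambda>k. if k = j then t else 1)"

definition ww :: "'a \<Rightarrow> 'a set \<Rightarrow> real \<Rightarrow> real" where
  "ww j S t = (if j \<in> S then t else 1)"

definition gg :: "'a \<Rightarrow> 'a set \<Rightarrow> real \<Rightarrow> real" where
  "gg j S t = usum (uu j t) S / ww j S t"

definition gl :: "'a \<Rightarrow> 'a set \<Rightarrow> real" where
  "gl j S = (if j \<in> S then 1 else real (card S))"

lemma usum_uu: assumes "finite S"
  shows "usum (uu j t) S = (if j \<in> S then t + real (card S - 1) else real (card S))"
proof (cases "j \<in> S")
  case True
  have "usum (uu j t) S = uu j t j + (\<Sum>k\<in>S - {j}. uu j t k)"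
    unfolding usum_def using sum.remove[OF assms True] by simp
  also have "(\<Sum>k\<in>S - {j}. uu j t k) = (\<Sum>k\<in>S - {j}. 1)"
    by (rule sum.cong) (auto simp: uu_def)
  finally show ?thesis using True assms by (simp add: uu_def card_Diff_singleton)
next
  case False
  have "usum (uu j t) S = (\<Sum>k\<in>S. 1)" unfolding usum_def
    by (rule sum.cong) (use False in \<open>auto simp: uu_def\<close>)
  then show ?thesis using False by simp
qed

lemma gl_pos: "finite S \<Longrightarrow> S \<noteq> {} \<Longrightarrow> 0 < gl j S"
  unfolding gl_def by (simp add: card_gt_0_iff)

lemma gg_pos: "finite S \<Longrightarrow> S \<noteq> {} \<Longrightarrow> 0 < t \<Longrightarrow> 0 < gg j S t"
  unfolding gg_def ww_def using usum_uu[of S j t] by (simp add: card_gt_0_iff)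

lemma gg_lim: assumes "finite S" shows "((gg j S) \<longlongrightarrow> gl j S) at_top"
proof (cases "j \<in> S")
  case True
  define c where "c = real (card S - 1)"
  have e: "eventually (\<lambda>t. 1 + c * inverse t = gg j S t) at_top"
    using eventually_gt_at_top[of "0::real"]
  proof eventually_elim
    case (elim t) then show ?case
      unfolding gg_def ww_def c_def using usum_uu[OF assms, of j t] True by (simp add: field_simps)
  qed
  have "((\<lambda>t::real. 1 + c * inverse t) \<longlongrightarrow> 1 + c * 0) at_top"
    by (intro tendsto_intros tendsto_inverse_0_at_top filterlim_ident)
  then have "((\<lambda>t::real. 1 + c * inverse t) \<longlongrightarrow> gl j S) at_top" using True by (simp add: gl_def)
  then show ?thesis using Lim_transform_eventually[OF _ e] by simp
next
  case False
  have "gg j S = (\<lambda>t. gl j S)" unfolding gg_def ww_def gl_def using usum_uu[OF assms] False by auto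
  then show ?thesis by simp
qed

lemma usum_split: "0 < t \<Longrightarrow> usum (uu j t) S = gg j S t * ww j S t"
  unfolding gg_def ww_def by simp

lemma prod_ww: "finite A \<Longrightarrow> (\<Prod>x\<in>A. ww j (F x) t) = t ^ card {x \<in> A. j \<in> F x}"
proof -
  assume f: "finite A"
  have "(\<Prod>x\<in>A. ww j (F x) t) = (\<Prod>x\<in>A. if j \<in> F x then t else 1)" unfolding ww_def by simp
  also have "\<dots> = (\<Prod>x\<in>{x \<in> A. j \<in> F x}. t)" using prod.inter_filter[OF f, of "\<lambda>_. t"] by simp
  finally show ?thesis by simp
qed

lemma asym_generic:
  fixes Sf :: "'i \<Rightarrow> 'a set" and Af Bf :: "'r \<Rightarrow> 'a set"
  assumes fI: "finite I0" and fR: "finite Rs"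
    and S: "\<And>i. i \<in> I0 \<Longrightarrow> finite (Sf i) \<and> Sf i \<noteq> {}"
    and A: "\<And>r. r \<in> Rs \<Longrightarrow> finite (Af r) \<and> Af r \<noteq> {}"
    and B: "\<And>r. r \<in> Rs \<Longrightarrow> finite (Bf r) \<and> Bf r \<noteq> {}"
  shows "\<exists>G c. (G \<longlongrightarrow> c) at_top \<and> 0 < c \<and> (\<forall>t>0.
     1 / (\<Prod>i\<in>I0. usum (uu j t) (Sf i)) * (\<Prod>r\<in>Rs. usum (uu j t) (Af r) / usum (uu j t) (Bf r))
     = G t * (t ^ card {r \<in> Rs. j \<in> Af r} / t ^ (card {i \<in> I0. j \<in> Sf i} + card {r \<in> Rs. j \<in> Bf r})))"
proof -
  define G where "G t = 1 / (\<Prod>i\<in>I0. gg j (Sf i) t) * (\<Prod>r\<in>Rs. gg j (Af r) t / gg j (Bf r) t)" for t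
  define c where "c = 1 / (\<Prod>i\<in>I0. gl j (Sf i)) * (\<Prod>r\<in>Rs. gl j (Af r) / gl j (Bf r))"
  have l1: "((\<lambda>t. \<Prod>i\<in>I0. gg j (Sf i) t) \<longlongrightarrow> (\<Prod>i\<in>I0. gl j (Sf i))) at_top"
  proof (rule tendsto_prod)
    fix i assume i: "i \<in> I0" show "((gg j (Sf i)) \<longlongrightarrow> gl j (Sf i)) at_top" by (rule gg_lim[OF conjunct1[OF S[OF i]]])
  qed
  have l2: "((\<lambda>t. \<Prod>r\<in>Rs. gg j (Af r) t / gg j (Bf r) t) \<longlongrightarrow> (\<Prod>r\<in>Rs. gl j (Af r) / gl j (Bf r))) at_top"
  proof (rule tendsto_prod)
    fix r assume r: "r \<in> Rs"
    have "((gg j (Af r)) \<longlongrightarrow> gl j (Af r)) at_top" using gg_lim[OF conjunct1[OF A[OF r]]] .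
    moreover have "((gg j (Bf r)) \<longlongrightarrow> gl j (Bf r)) at_top" using gg_lim[OF conjunct1[OF B[OF r]]] .
    moreover have "gl j (Bf r) \<noteq> 0" using gl_pos[OF conjunct1[OF B[OF r]] conjunct2[OF B[OF r]], of j] by simp
    ultimately show "((\<lambda>t. gg j (Af r) t / gg j (Bf r) t) \<longlongrightarrow> gl j (Af r) / gl j (Bf r)) at_top"
      by (rule tendsto_divide)
  qed
  have "(\<Prod>i\<in>I0. gl j (Sf i)) > 0"
  proof (rule prod_pos)
    fix i assume i: "i \<in> I0" show "0 < gl j (Sf i)" using gl_pos[OF conjunct1[OF S[OF i]] conjunct2[OF S[OF i]]] .
  qed
  then have l3: "((\<lambda>t. 1 / (\<Prod>i\<in>I0. gg j (Sf i) t)) \<longlongrightarrow> 1 / (\<Prod>i\<in>I0. gl j (Sf i))) at_top"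
    using tendsto_divide[OF tendsto_const l1] by simp
  have "(G \<longlongrightarrow> c) at_top" unfolding G_def c_def using tendsto_mult[OF l3 l2] by simp
  moreover have "0 < c" unfolding c_def
  proof (intro mult_pos_pos divide_pos_pos prod_pos zero_less_one)
    fix i assume i: "i \<in> I0" show "0 < gl j (Sf i)" using gl_pos[OF conjunct1[OF S[OF i]] conjunct2[OF S[OF i]]] .
  next
    fix i assume i: "i \<in> Rs" show "0 < gl j (Af i)" using gl_pos[OF conjunct1[OF A[OF i]] conjunct2[OF A[OF i]]] .
  next
    fix i assume i: "i \<in> Rs" show "0 < gl j (Bf i)" using gl_pos[OF conjunct1[OF B[OF i]] conjunct2[OF B[OF i]]] .
  qed
  moreover have "\<forall>t>0.
     1 / (\<Prod>i\<in>I0. usum (uu j t) (Sf i)) * (\<Prod>r\<in>Rs. usum (uu j t) (Af r) / usum (uu j t) (Bf r))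
     = G t * (t ^ card {r \<in> Rs. j \<in> Af r} / t ^ (card {i \<in> I0. j \<in> Sf i} + card {r \<in> Rs. j \<in> Bf r}))"
  proof (intro allI impI)
    fix t :: real assume t: "0 < t"
    define P1 where "P1 = (\<Prod>i\<in>I0. gg j (Sf i) t)"
    define P2 where "P2 = (\<Prod>r\<in>Rs. gg j (Af r) t / gg j (Bf r) t)"
    have P1pos: "0 < P1" unfolding P1_def
    proof (rule prod_pos)
      fix i assume i: "i \<in> I0" show "0 < gg j (Sf i) t" using gg_pos[OF conjunct1[OF S[OF i]] conjunct2[OF S[OF i]] t] .
    qed
    have "(\<Prod>i\<in>I0. usum (uu j t) (Sf i)) = (\<Prod>i\<in>I0. gg j (Sf i) t * ww j (Sf i) t)"
      by (rule prod.cong[OF refl]) (rule usum_split[OF t])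
    also have "\<dots> = P1 * (\<Prod>i\<in>I0. ww j (Sf i) t)" by (simp add: prod.distrib P1_def)
    also have "\<dots> = P1 * t ^ card {i \<in> I0. j \<in> Sf i}" using prod_ww[OF fI, of j Sf t] by simp
    finally have e1: "(\<Prod>i\<in>I0. usum (uu j t) (Sf i)) = P1 * t ^ card {i \<in> I0. j \<in> Sf i}" .
    have "(\<Prod>r\<in>Rs. usum (uu j t) (Af r) / usum (uu j t) (Bf r))
        = (\<Prod>r\<in>Rs. (gg j (Af r) t / gg j (Bf r) t) * (ww j (Af r) t / ww j (Bf r) t))"
      by (rule prod.cong[OF refl]) (simp only: usum_split[OF t] times_divide_times_eq)
    also have "\<dots> = P2 * ((\<Prod>r\<in>Rs. ww j (Af r) t) / (\<Prod>r\<in>Rs. ww j (Bf r) t))"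
      unfolding P2_def by (simp add: prod.distrib prod_dividef)
    also have "\<dots> = P2 * (t ^ card {r \<in> Rs. j \<in> Af r} / t ^ card {r \<in> Rs. j \<in> Bf r})"
      using prod_ww[OF fR, of j Af t] prod_ww[OF fR, of j Bf t] by simp
    finally have e2: "(\<Prod>r\<in>Rs. usum (uu j t) (Af r) / usum (uu j t) (Bf r))
        = P2 * (t ^ card {r \<in> Rs. j \<in> Af r} / t ^ card {r \<in> Rs. j \<in> Bf r})" .
    have "G t = 1 / P1 * P2" unfolding G_def P1_def P2_def by simp
    then show "1 / (\<Prod>i\<in>I0. usum (uu j t) (Sf i)) * (\<Prod>r\<in>Rs. usum (uu j t) (Af r) / usum (uu j t) (Bf r))
     = G t * (t ^ card {r \<in> Rs. j \<in> Af r} / t ^ (card {i \<in> I0. j \<in> Sf i} + card {r \<in> Rs. j \<in> Bf r}))"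
      unfolding e1 e2 using P1pos t by (simp add: field_simps power_add)
  qed
  ultimately show ?thesis by blast
qed



lemma gen_self: "x \<in> I \<Longrightarrow> x \<in> S \<Longrightarrow> x \<in> gen I E h S"
  unfolding gen_iff using dpath_hd by blast

lemma gen_sub: "gen I E h S \<subseteq> I" unfolding gen_def by blast

lemma ram_facts: assumes Sh: "is_shrub I E h" and R: "R \<in> Ram_lows I E h"
  shows "R \<noteq> {}" "R \<subseteq> gen (I - gen I E h (ram_class I E h R)) (restr_edges E (gen I E h (ram_class I E h R))) h R"
proof -
  obtain v where v: "v \<in> I" "ramified E h v" "R = lower E h v" using R unfolding Ram_lows_def by blast
  obtain a where "covers E h v a" using v(2) unfolding ramified_def by blast
  then show "R \<noteq> {}" using v(3) unfolding lower_def by blast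
  show "R \<subseteq> gen (I - gen I E h (ram_class I E h R)) (restr_edges E (gen I E h (ram_class I E h R))) h R"
  proof
    fix y assume y: "y \<in> R"
    have yI: "y \<in> I" using lower_I[OF Sh] y v(3) by blast
    have yX: "y \<notin> gen I E h (ram_class I E h R)"
    proof
      assume yg: "y \<in> gen I E h (ram_class I E h R)"
      obtain xs where xs: "dpath E h xs" "hd xs = y" using dpath_exists[OF Sh yI] by blast
      have "\<forall>xs. dpath E h xs \<and> hd xs = y \<longrightarrow> set xs \<inter> ram_class I E h R \<noteq> {}"
        using yg by (simp add: gen_iff)
      then have "set xs \<inter> ram_class I E h R \<noteq> {}" using xs by simp
      then obtain w where w: "w \<in> set xs" "w \<in> ram_class I E h R" by blast
      have "reach E h y w" using dpath_reach[OF xs(1) w(1)] xs(2) by simp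
      then have hw: "h w \<le> h y" using reach_h[of E h y w] by simp
      have "lower E h w = R" using w(2) unfolding ram_class_def by simp
      then have "y \<in> lower E h w" using y by simp
      then have "covers E h w y" by (simp add: lower_def)
      then show False using covers_h[of E h w y] hw by simp
    qed
    have "y \<in> gen I E h R" using gen_self[OF yI y] .
    then show "y \<in> gen (I - gen I E h (ram_class I E h R)) (restr_edges E (gen I E h (ram_class I E h R))) h R"
      using gen_restr[of I E h R] yX by simp
  qed
qed

lemma finite_Ram: "is_shrub I E h \<Longrightarrow> finite (Ram_lows I E h)"
proof -
  assume Sh: "is_shrub I E h"
  have "Ram_lows I E h \<subseteq> Pow I" unfolding Ram_lows_def using lower_I[OF Sh] by blast
  then show ?thesis using shrub_finite[OF Sh] by (simp add: finite_subset)
qed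

lemma comb_full: assumes Sh: "is_shrub I E h" and j: "j \<in> I"
  shows "card {i \<in> I. j \<in> gen I E h {i}} + card {R \<in> Ram_lows I E h. j \<in> gen I E h R}
    = Suc (h j) + card {R \<in> Ram_lows I E h. j \<in> gen (I - gen I E h (ram_class I E h R)) (restr_edges E (gen I E h (ram_class I E h R))) h R}"
proof -
  define Ra where "Ra = Ram_lows I E h"
  define XX where "XX R = gen I E h (ram_class I E h R)" for R
  have fR: "finite Ra" unfolding Ra_def using finite_Ram[OF Sh] .
  have AX: "gen (I - XX R) (restr_edges E (XX R)) h R = gen I E h R - XX R" for R
    unfolding XX_def by (rule gen_restr)
  have XB: "XX R \<subseteq> gen I E h R" for R unfolding XX_def by (rule class_gen_sub)
  have un: "{R \<in> Ra. j \<in> gen I E h R} = {R \<in> Ra. j \<in> gen (I - XX R) (restr_edges E (XX R)) h R} \<union> {R \<in> Ra. j \<in> XX R}"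
    using AX XB by auto
  have dis: "{R \<in> Ra. j \<in> gen (I - XX R) (restr_edges E (XX R)) h R} \<inter> {R \<in> Ra. j \<in> XX R} = {}"
    using AX by blast
  have "card {R \<in> Ra. j \<in> gen I E h R} = card {R \<in> Ra. j \<in> gen (I - XX R) (restr_edges E (XX R)) h R} + card {R \<in> Ra. j \<in> XX R}"
    unfolding un by (rule card_Un_disjoint) (use fR dis in auto)
  moreover have "card {i \<in> I. j \<in> gen I E h {i}} + card {R \<in> Ra. j \<in> XX R} = Suc (h j)"
    using count_comb[OF Sh j] unfolding Ra_def XX_def .
  ultimately show ?thesis unfolding Ra_def XX_def by simp
qed

lemma fP_asym: assumes Sh: "is_shrub I E h" and j: "j \<in> I"
  shows "\<exists>G c. (G \<longlongrightarrow> c) at_top \<and> 0 < c \<and> (\<forall>t>0. fP I E h (uu j t) =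
     G t * (t ^ card {R \<in> Ram_lows I E h. j \<in> gen (I - gen I E h (ram_class I E h R)) (restr_edges E (gen I E h (ram_class I E h R))) h R}
       / t ^ (card {i \<in> I. j \<in> gen I E h {i}} + card {R \<in> Ram_lows I E h. j \<in> gen I E h R})))"
proof -
  have fI: "finite I" using shrub_finite[OF Sh] .
  have fin: "finite S" if "S \<subseteq> I" for S using finite_subset[OF that fI] .
  have S: "finite (gen I E h {i}) \<and> gen I E h {i} \<noteq> {}" if "i \<in> I" for i
    using fin[OF gen_sub] gen_self[OF that, of "{i}"] by blast
  have A: "finite (gen (I - gen I E h (ram_class I E h R)) (restr_edges E (gen I E h (ram_class I E h R))) h R)
     \<and> gen (I - gen I E h (ram_class I E h R)) (restr_edges E (gen I E h (ram_class I E h R))) h R \<noteq> {}"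
    if "R \<in> Ram_lows I E h" for R
  proof
    have "gen (I - gen I E h (ram_class I E h R)) (restr_edges E (gen I E h (ram_class I E h R))) h R \<subseteq> I"
      using gen_sub[of "I - gen I E h (ram_class I E h R)"] by blast
    then show "finite (gen (I - gen I E h (ram_class I E h R)) (restr_edges E (gen I E h (ram_class I E h R))) h R)"
      by (rule fin)
    show "gen (I - gen I E h (ram_class I E h R)) (restr_edges E (gen I E h (ram_class I E h R))) h R \<noteq> {}"
      using ram_facts[OF Sh that] by blast
  qed
  have B: "finite (gen I E h R) \<and> gen I E h R \<noteq> {}" if "R \<in> Ram_lows I E h" for R
  proof
    show "finite (gen I E h R)" using fin[OF gen_sub] .
    have "gen (I - gen I E h (ram_class I E h R)) (restr_edges E (gen I E h (ram_class I E h R))) h R \<subseteq> gen I E h R"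
      using gen_restr[of I E h R] by simp
    then show "gen I E h R \<noteq> {}" using A[OF that] by blast
  qed
  from asym_generic[OF fI finite_Ram[OF Sh] S A B, where j=j]
  show ?thesis unfolding fP_def Let_def by simp
qed

theorem mainTheorem14:
  fixes I :: "'a set" and E E' :: "'a set set" and h h' :: "'a \<Rightarrow> nat"
  assumes "is_shrub I E h" and "is_shrub I E' h'"
    and "\<forall>u :: 'a \<Rightarrow> real. (\<forall>i\<in>I. 0 < u i) \<longrightarrow> fP I E h u = fP I E' h' u"
  shows "\<forall>i\<in>I. h i = h' i"
proof
  fix j assume j: "j \<in> I"
  obtain G c where G: "(G \<longlongrightarrow> c) at_top" "0 < c" "\<forall>t>0. fP I E h (uu j t) =
     G t * (t ^ card {R \<in> Ram_lows I E h. j \<in> gen (I - gen I E h (ram_class I E h R)) (restr_edges E (gen I E h (ram_class I E h R))) h R}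
       / t ^ (card {i \<in> I. j \<in> gen I E h {i}} + card {R \<in> Ram_lows I E h. j \<in> gen I E h R}))"
    using fP_asym[OF assms(1) j] by blast
  obtain G' c' where G': "(G' \<longlongrightarrow> c') at_top" "0 < c'" "\<forall>t>0. fP I E' h' (uu j t) =
     G' t * (t ^ card {R \<in> Ram_lows I E' h'. j \<in> gen (I - gen I E' h' (ram_class I E' h' R)) (restr_edges E' (gen I E' h' (ram_class I E' h' R))) h' R}
       / t ^ (card {i \<in> I. j \<in> gen I E' h' {i}} + card {R \<in> Ram_lows I E' h'. j \<in> gen I E' h' R}))"
    using fP_asym[OF assms(2) j] by blast
  have eq: "fP I E h (uu j t) = fP I E' h' (uu j t)" if "0 < t" for t
  proof -
    have "\<forall>i\<in>I. 0 < uu j t i" using that by (simp add: uu_def)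
    then show ?thesis using assms(3) by blast
  qed
  have "card {R \<in> Ram_lows I E h. j \<in> gen (I - gen I E h (ram_class I E h R)) (restr_edges E (gen I E h (ram_class I E h R))) h R}
      + (card {i \<in> I. j \<in> gen I E' h' {i}} + card {R \<in> Ram_lows I E' h'. j \<in> gen I E' h' R})
    = card {R \<in> Ram_lows I E' h'. j \<in> gen (I - gen I E' h' (ram_class I E' h' R)) (restr_edges E' (gen I E' h' (ram_class I E' h' R))) h' R}
      + (card {i \<in> I. j \<in> gen I E h {i}} + card {R \<in> Ram_lows I E h. j \<in> gen I E h R})"
  proof (rule exps_eq[OF _ G(1) G'(1) G(2) G'(2)])
    fix t :: real assume t: "0 < t"
    show "G t * (t ^ card {R \<in> Ram_lows I E h. j \<in> gen (I - gen I E h (ram_class I E h R)) (restr_edges E (gen I E h (ram_class I E h R))) h R}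
       / t ^ (card {i \<in> I. j \<in> gen I E h {i}} + card {R \<in> Ram_lows I E h. j \<in> gen I E h R}))
      = G' t * (t ^ card {R \<in> Ram_lows I E' h'. j \<in> gen (I - gen I E' h' (ram_class I E' h' R)) (restr_edges E' (gen I E' h' (ram_class I E' h' R))) h' R}
       / t ^ (card {i \<in> I. j \<in> gen I E' h' {i}} + card {R \<in> Ram_lows I E' h'. j \<in> gen I E' h' R}))"
      using G(3) G'(3) eq[OF t] t by simp
  qed
  then show "h j = h' j" using comb_full[OF assms(1) j] comb_full[OF assms(2) j] by simp
qed

end
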